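(* Let $\mathcal{H}$ be a complex linear space with a non-degenerate indefinite inner product $[\cdot,\cdot]$, and let $\mathcal{H}=\mathcal{L}_+[\dot+]\mathcal{L}_-$ be a fundamental decomposition with associated inner product $\langle\cdot,\cdot\rangle_{\mathcal{L}}$ and norm $\|\cdot\|_{\mathcal{L}}$. Let $\{U(t):t\in\mathbb{R}\}$ be a one-parameter group of bijective linear operators on $\mathcal{H}$ ($U(0)=I$, $U(t+s)=U(t)U(s)$) which are unitary with respect to $[\cdot,\cdot]$, i.e. $[U(t)f,U(t)g]=[f,g]$ for all $f,g\in\mathcal{H}$, $t\in\mathbb{R}$. For $t\in\mathbb{R}$ let $\|\cdot\|_t$ be the norm associated with the fundamental decomposition $\mathcal{H}=\mathcal{L}^t_+[\dot+]\mathcal{L}^t_-$, where $\mathcal{L}^t_\pm=U(t)\mathcal{L}_\pm$. Then for every $t\neq0$ the following are equivalent: (i) $U(t)$ and $U(t)^{-1}$ are bounded operators in the pre-Hilbert space $(\mathcal{H},\langle\cdot,\cdot\rangle_{\mathcal{L}})$; (ii) the norms $\|\cdot\|_{\mathcal{L}}$ and $\|\cdot\|_t$ are equivalent on $\mathcal{H}$.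
   Context: An indefinite inner product is a Hermitian sesquilinear form $[\cdot,\cdot]$ (linear in the second argument) with vectors of both positive and negative square; non-degenerate means $[f,g]=0\ \forall g$ implies $f=0$. A subspace is positive (negative) if each nonzero vector in it has $[f,f]>0$ ($<0$). A fundamental decomposition $\mathcal{H}=\mathcal{L}_+[\dot+]\mathcal{L}_-$ is a direct sum of a positive subspace $\mathcal{L}_+$ and a negative subspace $\mathcal{L}_-$ that are $[\cdot,\cdot]$-orthogonal; its associated inner product is $\langle f,g\rangle_{\mathcal{L}}=[f_+,g_+]-[f_-,g_-]$ for $f=f_++f_-$, $g=g_++g_-$, $f_\pm,g_\pm\in\mathcal{L}_\pm$, with norm $\|f\|_{\mathcal{L}}=\langle f,f\rangle_{\mathcal{L}}^{1/2}$. Since $U(t)$ is bijective and preserves $[\cdot,\cdot]$, $\mathcal{H}=U(t)\mathcal{L}_+[\dot+]U(t)\mathcal{L}_-$ is again a fundamental decomposition; $\|\cdot\|_t$ is its associated norm. *)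

theory Defs
  imports Complex_Main
begin

text \<open>The complex linear space H is a type 'a with addition (ab_group_add) and a complex
scalar multiplication sc, assumed to satisfy the vector-space axioms (vector_space sc).\<close>

definition hermitian_sesq :: "(complex \<Rightarrow> 'a::ab_group_add \<Rightarrow> 'a) \<Rightarrow> ('a \<Rightarrow> 'a \<Rightarrow> complex) \<Rightarrow> bool" where
  "hermitian_sesq sc ip \<longleftrightarrow>
     (\<forall>f g. ip f g = cnj (ip g f)) \<and>
     (\<forall>f g h. ip f (g + h) = ip f g + ip f h) \<and>
     (\<forall>f g c. ip f (sc c g) = c * ip f g)"

definition nondegenerate :: "('a::zero \<Rightarrow> 'a \<Rightarrow> complex) \<Rightarrow> bool" where
  "nondegenerate ip \<longleftrightarrow> (\<forall>f. (\<forall>g. ip f g = 0) \<longrightarrow> f = 0)"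

text \<open>Indefinite: there are vectors of positive and of negative square
(ip f f is real by hermiticity, so we compare its real part).\<close>
definition indefinite :: "('a \<Rightarrow> 'a \<Rightarrow> complex) \<Rightarrow> bool" where
  "indefinite ip \<longleftrightarrow> (\<exists>f. Re (ip f f) > 0) \<and> (\<exists>g. Re (ip g g) < 0)"

definition positive_subspace :: "(complex \<Rightarrow> 'a::ab_group_add \<Rightarrow> 'a) \<Rightarrow> ('a \<Rightarrow> 'a \<Rightarrow> complex) \<Rightarrow> 'a set \<Rightarrow> bool" where
  "positive_subspace sc ip L \<longleftrightarrow> module.subspace sc L \<and> (\<forall>f\<in>L. f \<noteq> 0 \<longrightarrow> Re (ip f f) > 0)"

definition negative_subspace :: "(complex \<Rightarrow> 'a::ab_group_add \<Rightarrow> 'a) \<Rightarrow> ('a \<Rightarrow> 'a \<Rightarrow> complex) \<Rightarrow> 'a set \<Rightarrow> bool" where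
  "negative_subspace sc ip L \<longleftrightarrow> module.subspace sc L \<and> (\<forall>f\<in>L. f \<noteq> 0 \<longrightarrow> Re (ip f f) < 0)"

definition fundamental_decomposition ::
  "(complex \<Rightarrow> 'a::ab_group_add \<Rightarrow> 'a) \<Rightarrow> ('a \<Rightarrow> 'a \<Rightarrow> complex) \<Rightarrow> 'a set \<Rightarrow> 'a set \<Rightarrow> bool" where
  "fundamental_decomposition sc ip Lp Lm \<longleftrightarrow>
     positive_subspace sc ip Lp \<and> negative_subspace sc ip Lm \<and>
     (\<forall>f\<in>Lp. \<forall>g\<in>Lm. ip f g = 0) \<and>
     Lp \<inter> Lm = {0} \<and>
     (\<forall>f. \<exists>p\<in>Lp. \<exists>m\<in>Lm. f = p + m)"

definition comp_plus :: "'a set \<Rightarrow> 'a set \<Rightarrow> 'a::ab_group_add \<Rightarrow> 'a" where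
  "comp_plus Lp Lm f = (THE p. p \<in> Lp \<and> (\<exists>m\<in>Lm. f = p + m))"

definition comp_minus :: "'a set \<Rightarrow> 'a set \<Rightarrow> 'a::ab_group_add \<Rightarrow> 'a" where
  "comp_minus Lp Lm f = (THE m. m \<in> Lm \<and> (\<exists>p\<in>Lp. f = p + m))"

definition fd_inner :: "('a \<Rightarrow> 'a \<Rightarrow> complex) \<Rightarrow> 'a set \<Rightarrow> 'a set \<Rightarrow> 'a::ab_group_add \<Rightarrow> 'a \<Rightarrow> complex" where
  "fd_inner ip Lp Lm f g =
     ip (comp_plus Lp Lm f) (comp_plus Lp Lm g) - ip (comp_minus Lp Lm f) (comp_minus Lp Lm g)"

definition fd_norm :: "('a \<Rightarrow> 'a \<Rightarrow> complex) \<Rightarrow> 'a set \<Rightarrow> 'a set \<Rightarrow> 'a::ab_group_add \<Rightarrow> real" where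
  "fd_norm ip Lp Lm f = sqrt (Re (fd_inner ip Lp Lm f f))"

definition bounded_op :: "('a \<Rightarrow> 'a \<Rightarrow> complex) \<Rightarrow> 'a set \<Rightarrow> 'a set \<Rightarrow> ('a::ab_group_add \<Rightarrow> 'a) \<Rightarrow> bool" where
  "bounded_op ip Lp Lm T \<longleftrightarrow> (\<exists>C. \<forall>f. fd_norm ip Lp Lm (T f) \<le> C * fd_norm ip Lp Lm f)"

definition equivalent_norms :: "('a \<Rightarrow> real) \<Rightarrow> ('a \<Rightarrow> real) \<Rightarrow> bool" where
  "equivalent_norms n1 n2 \<longleftrightarrow> (\<exists>a b. a > 0 \<and> b > 0 \<and> (\<forall>f. a * n1 f \<le> n2 f \<and> n2 f \<le> b * n1 f))"

end

theory Submission
  imports Defs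
begin

lemma decomp_unique:
  assumes vs: "vector_space sc" and fd: "fundamental_decomposition sc ip Lp Lm"
    and "p \<in> Lp" "p' \<in> Lp" "m \<in> Lm" "m' \<in> Lm" "p + m = p' + m'"
  shows "p = p' \<and> m = m'"
proof -
  have md: "module sc" using vs module_iff_vector_space by blast
  have sp: "module.subspace sc Lp" and sm: "module.subspace sc Lm" and int: "Lp \<inter> Lm = {0}"
    using fd unfolding fundamental_decomposition_def positive_subspace_def negative_subspace_def by auto
  have "p - p' \<in> Lp" using module.subspace_diff[OF md sp] assms by blast
  moreover have "m' - m \<in> Lm" using module.subspace_diff[OF md sm] assms by blast
  moreover have "p - p' = m' - m" using assms(7) by (simp add: algebra_simps)
  ultimately have "p - p' = 0" using int by (metis IntI singletonD)
  then show ?thesis using assms(7) by (metis add_left_cancel eq_iff_diff_eq_0)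
qed

lemma comp_eqs:
  assumes vs: "vector_space sc" and fd: "fundamental_decomposition sc ip Lp Lm"
    and "p \<in> Lp" "m \<in> Lm"
  shows "comp_plus Lp Lm (p + m) = p" "comp_minus Lp Lm (p + m) = m"
proof -
  show "comp_plus Lp Lm (p + m) = p" unfolding comp_plus_def
    apply (rule the_equality) using assms apply blast
    using decomp_unique[OF vs fd] assms by metis
  show "comp_minus Lp Lm (p + m) = m" unfolding comp_minus_def
    apply (rule the_equality) using assms apply blast
    using decomp_unique[OF vs fd] assms by metis
qed

lemma norm_nonneg:
  assumes vs: "vector_space sc" and hs: "hermitian_sesq sc ip"
    and fd: "fundamental_decomposition sc ip Lp Lm"
  shows "fd_norm ip Lp Lm f \<ge> 0"
proof -
  obtain p m where pm: "p \<in> Lp" "m \<in> Lm" "f = p + m" using fd unfolding fundamental_decomposition_def by blast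
  have z: "ip x 0 = 0" for x using hs unfolding hermitian_sesq_def
    by (metis add_cancel_right_right add_0)
  have "Re (ip p p) \<ge> 0" using pm fd z unfolding fundamental_decomposition_def positive_subspace_def
    by (cases "p = 0") (auto intro: less_imp_le)
  moreover have "Re (ip m m) \<le> 0" using pm fd z unfolding fundamental_decomposition_def negative_subspace_def
    by (cases "m = 0") (auto intro: less_imp_le)
  ultimately show ?thesis unfolding fd_norm_def fd_inner_def using comp_eqs[OF vs fd pm(1,2)] pm(3) by simp
qed

lemma norm_transport:
  assumes vs: "vector_space sc" and fd: "fundamental_decomposition sc ip Lp Lm"
    and add: "\<And>x y. V (x + y) = V x + V y" and bj: "bij V"
    and iso: "\<And>f g. ip (V f) (V g) = ip f g"
  shows "fd_norm ip (V ` Lp) (V ` Lm) f = fd_norm ip Lp Lm (inv V f)"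
proof -
  define g where "g = inv V f"
  have fg: "f = V g" unfolding g_def using bj by (simp add: bij_is_surj surj_f_inv_f)
  obtain p m where pm: "p \<in> Lp" "m \<in> Lm" "g = p + m" using fd unfolding fundamental_decomposition_def by blast
  have inj: "inj V" using bj bij_is_inj by blast
  have uq: "\<And>p' m'. p' \<in> Lp \<Longrightarrow> m' \<in> Lm \<Longrightarrow> V p' + V m' = V p + V m \<Longrightarrow> p' = p \<and> m' = m"
  proof -
    fix p' m' assume a: "p' \<in> Lp" "m' \<in> Lm" "V p' + V m' = V p + V m"
    then have "V (p' + m') = V (p + m)" using add by simp
    then have "p' + m' = p + m" using inj by (simp add: inj_eq)
    then show "p' = p \<and> m' = m" using decomp_unique[OF vs fd] a pm by metis
  qed
  have f: "f = V p + V m" using fg pm add by simp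
  have c1: "comp_plus (V ` Lp) (V ` Lm) f = V p" unfolding comp_plus_def
    apply (rule the_equality) using pm f apply blast
    using uq f by blast
  have c2: "comp_minus (V ` Lp) (V ` Lm) f = V m" unfolding comp_minus_def
    apply (rule the_equality) using pm f apply blast
    using uq f by blast
  show ?thesis unfolding fd_norm_def fd_inner_def c1 c2 iso g_def[symmetric] pm(3)
    comp_eqs[OF vs fd pm(1,2)] ..
qed

theorem lemma3p5:
  fixes sc :: "complex \<Rightarrow> 'a::ab_group_add \<Rightarrow> 'a"
    and ip :: "'a \<Rightarrow> 'a \<Rightarrow> complex"
    and Lp Lm :: "'a set"
    and U :: "real \<Rightarrow> 'a \<Rightarrow> 'a"
    and t :: real
  assumes "vector_space sc"
    and "hermitian_sesq sc ip"
    and "nondegenerate ip"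
    and "indefinite ip"
    and "fundamental_decomposition sc ip Lp Lm"
    and "\<And>s. Vector_Spaces.linear sc sc (U s)"
    and "\<And>s. bij (U s)"
    and "U 0 = id"
    and "\<And>s r. U (s + r) = U s \<circ> U r"
    and "\<And>s f g. ip (U s f) (U s g) = ip f g"
    and "t \<noteq> 0"
  shows "(bounded_op ip Lp Lm (U t) \<and> bounded_op ip Lp Lm (inv (U t))) \<longleftrightarrow>
         equivalent_norms (fd_norm ip Lp Lm) (fd_norm ip (U t ` Lp) (U t ` Lm))"
proof -
  define V where "V = U t"
  define W where "W = inv V"
  define N where "N = fd_norm ip Lp Lm"
  have add: "\<And>x y. V (x + y) = V x + V y" using assms(6)[of t] unfolding V_def by (simp add: Vector_Spaces.linear_iff)
  have bj: "bij V" using assms(7) V_def by blast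
  have VW: "V (W f) = f" for f unfolding W_def using bj by (simp add: bij_is_surj surj_f_inv_f bij_is_inj)
  have WV: "W (V f) = f" for f unfolding W_def using bj by (simp add: bij_is_surj surj_f_inv_f bij_is_inj)
  have tr: "fd_norm ip (V ` Lp) (V ` Lm) f = N (W f)" for f
    unfolding N_def W_def by (rule norm_transport[OF assms(1) assms(5) add bj]) (use assms(10) V_def in blast)
  have nn: "N f \<ge> 0" for f unfolding N_def by (rule norm_nonneg[OF assms(1,2,5)])
  have "(bounded_op ip Lp Lm V \<and> bounded_op ip Lp Lm W) \<longleftrightarrow>
         equivalent_norms N (\<lambda>f. N (W f))"
  proof
    assume "bounded_op ip Lp Lm V \<and> bounded_op ip Lp Lm W"
    then obtain C D where C: "\<And>f. N (V f) \<le> C * N f" and D: "\<And>f. N (W f) \<le> D * N f"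
      unfolding bounded_op_def N_def by blast
    show "equivalent_norms N (\<lambda>f. N (W f))" unfolding equivalent_norms_def
    proof (intro exI conjI allI)
      show "0 < 1 / max C 1" "0 < max D 1" by auto
      fix f
      have "N f \<le> C * N (W f)" using C[of "W f"] VW by simp
      also have "\<dots> \<le> max C 1 * N (W f)" using nn[of "W f"] by (simp add: mult_right_mono)
      finally show "1 / max C 1 * N f \<le> N (W f)" by (simp add: field_simps)
      show "N (W f) \<le> max D 1 * N f" using D[of f] nn[of f]
        by (meson max.cobounded1 mult_right_mono order_trans)
    qed
  next
    assume "equivalent_norms N (\<lambda>f. N (W f))"
    then obtain a b where ab: "a > 0" "b > 0" "\<And>f. a * N f \<le> N (W f) \<and> N (W f) \<le> b * N f"
      unfolding equivalent_norms_def by blast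
    have "N (V g) \<le> (1 / a) * N g" for g using ab(3)[of "V g"] ab(1) WV by (simp add: field_simps)
    then show "bounded_op ip Lp Lm V \<and> bounded_op ip Lp Lm W"
      unfolding bounded_op_def N_def[symmetric] using ab(3) by blast
  qed
  then show ?thesis unfolding V_def W_def N_def tr[unfolded V_def W_def N_def] by simp
qed

end
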